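(* Let $N\ge1$, $K>0$, $r_i>0$, let $(\mu_{ij})$ be a nonnegative, symmetric, irreducible $N\times N$ matrix, and let $\alpha:\mathbb{R}^N\to\mathbb{R}$ be locally Lipschitz with $\alpha(0)=0$, monotone increasing for the componentwise order, and such that there exist positive $R,k,c$ with $c(\sum_jv_j)^k\le\alpha(v)$ for all $v\in[0,\infty)^N$ with $\sum_j|v_j|\ge R$. If $v\in[0,\infty)^N$ is a nonnegative stationary solution of $$\frac{dv_i}{dt}=v_i\left[r_i-\frac{1}{K}\alpha(v)\right]+\sum_{j=1}^N\mu_{ij}(v_j-v_i),\qquad i=1,\dots,N,$$ then either $v\equiv0$ or $v_i>0$ for all $i$.
   Context: A stationary solution is a vector at which the right-hand side vanishes for every $i$. *)

theory Defs
  imports "HOL-Analysis.Analysis"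
begin

definition irreducible_mat :: "real^'n^'n \<Rightarrow> bool" where
  "irreducible_mat M \<longleftrightarrow>
     (\<forall>i j. i \<noteq> j \<longrightarrow> (i, j) \<in> {(a, b). a \<noteq> b \<and> M $ a $ b > 0}\<^sup>+)"

definition locally_lipschitz :: "(real^'n \<Rightarrow> real) \<Rightarrow> bool" where
  "locally_lipschitz f \<longleftrightarrow>
     (\<forall>x. \<exists>e>0. \<exists>L. \<forall>y\<in>ball x e. \<forall>z\<in>ball x e. \<bar>f y - f z\<bar> \<le> L * dist y z)"

definition rhs :: "real^'n \<Rightarrow> real \<Rightarrow> real^'n^'n \<Rightarrow> (real^'n \<Rightarrow> real) \<Rightarrow> real^'n \<Rightarrow> 'n \<Rightarrow> real" where
  "rhs r K \<mu> \<alpha> v i = v $ i * (r $ i - \<alpha> v / K) + (\<Sum>j\<in>UNIV. \<mu> $ i $ j * (v $ j - v $ i))"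

definition stationary :: "real^'n \<Rightarrow> real \<Rightarrow> real^'n^'n \<Rightarrow> (real^'n \<Rightarrow> real) \<Rightarrow> real^'n \<Rightarrow> bool" where
  "stationary r K \<mu> \<alpha> v \<longleftrightarrow> (\<forall>i. rhs r K \<mu> \<alpha> v i = 0)"

end

theory Submission
  imports Defs
begin

theorem lemma4p2:
  fixes r :: "real^'n" and K :: real and \<mu> :: "real^'n^'n"
    and \<alpha> :: "real^'n \<Rightarrow> real" and v :: "real^'n"
  assumes K_pos: "K > 0"
    and r_pos: "\<forall>i. r $ i > 0"
    and mu_nonneg: "\<forall>i j. \<mu> $ i $ j \<ge> 0"
    and mu_sym: "\<forall>i j. \<mu> $ i $ j = \<mu> $ j $ i"
    and mu_irred: "irreducible_mat \<mu>"
    and alpha_lip: "locally_lipschitz \<alpha>"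
    and alpha_zero: "\<alpha> 0 = 0"
    and alpha_mono: "\<forall>u w. (\<forall>i. u $ i \<le> w $ i) \<longrightarrow> \<alpha> u \<le> \<alpha> w"
    and alpha_growth: "\<exists>R k c. R > 0 \<and> k > 0 \<and> c > 0 \<and>
        (\<forall>w. (\<forall>j. w $ j \<ge> 0) \<and> (\<Sum>j\<in>UNIV. \<bar>w $ j\<bar>) \<ge> R
              \<longrightarrow> c * (\<Sum>j\<in>UNIV. w $ j) powr k \<le> \<alpha> w)"
    and v_nonneg: "\<forall>i. v $ i \<ge> 0"
    and v_stat: "stationary r K \<mu> \<alpha> v"
  shows "v = 0 \<or> (\<forall>i. v $ i > 0)"
proof -
  have edge: "v $ b = 0" if va: "v $ a = 0" and mab: "\<mu> $ a $ b > 0" for a b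
  proof -
    have "rhs r K \<mu> \<alpha> v a = 0" using v_stat unfolding stationary_def by blast
    hence S: "(\<Sum>j\<in>UNIV. \<mu> $ a $ j * v $ j) = 0" using va unfolding rhs_def by simp
    have "\<forall>j\<in>UNIV. \<mu> $ a $ j * v $ j = 0"
      using sum_nonneg_eq_0_iff[of UNIV "\<lambda>j. \<mu> $ a $ j * v $ j"] S mu_nonneg v_nonneg
      by (simp add: mult_nonneg_nonneg)
    hence "\<mu> $ a $ b * v $ b = 0" by blast
    thus ?thesis using mab by simp
  qed
  have path: "v $ j = 0" if "(i, j) \<in> {(a, b). a \<noteq> b \<and> \<mu> $ a $ b > 0}\<^sup>+" and "v $ i = 0" for i j
    using that
  proof (induction rule: trancl_induct)
    case (base y) thus ?case using edge by blast
  next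
    case (step y z) thus ?case using edge by blast
  qed
  show ?thesis
  proof (cases "\<forall>i. v $ i > 0")
    case False
    then obtain i where vi: "v $ i = 0" using v_nonneg by (metis less_eq_real_def)
    have "v $ j = 0" for j
    proof (cases "i = j")
      case True thus ?thesis using vi by simp
    next
      case False thus ?thesis using mu_irred vi path unfolding irreducible_mat_def by blast
    qed
    thus ?thesis by (simp add: vec_eq_iff)
  qed simp
qed

end
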